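(* $\mathcal{FSTA}^{F}_{\mathcal{F.V.}} > \mathcal{FSTA}^{F}_{\mathcal{L.V.}}$, i.e. the model $\mathcal{FSTA}$ under the fully synchronous scheduler with full visibility is computationally more powerful than the model $\mathcal{FSTA}$ under the fully synchronous scheduler with limited visibility.
   Context: Robots are anonymous, identical, autonomous computational entities viewed as points moving in the Euclidean plane. Each has its own local coordinate system, with no agreement between robots and no common chirality, and perceives itself at its origin. Robots operate in Look-Compute-Move cycles. In Look a robot takes an instantaneous snapshot of the positions (and visible lights, if any) of the robots it can see. In Compute it runs the common algorithm on the snapshot to obtain a destination. In Move it moves there. Models: - $\mathcal{OBLOT}$: robots are oblivious (no memory of previous cycles) and silent (no means of communication). - $\mathcal{LUMI}$: each robot carries a persistent light whose color is taken from a finite set and is set at the end of Compute; the light is visible to the robot itself and to the other robots. - $\mathcal{FSTA}$: the light is internal, visible only to its owner. It acts as a finite persistent state; there is no communication. - $\mathcal{FCOM}$: the light is visible only to the other robots. A robot does not see its own light and is otherwise oblivious. Schedulers: time is divided into rounds. Under the semi-synchronous scheduler $S$ (SSYNCH), in each round an adversarially chosen set of robots is activated and they perform one full cycle in perfect synchronization; every robot is activated infinitely often. Under the fully synchronous scheduler $F$ (FSYNCH), every robot is activated in every round. Visibility: - Full visibility $\mathcal{F.V.}$: every robot sees all robots. - Limited visibility $\mathcal{L.V.}$: a robot sees only the robots within a fixed distance $V_r$ of its current position, with $V_r$ the same for all robots. The visibility graph (robots adjacent iff they see each other) of the initial configuration is assumed connected. Relations: $\mathcal{M}^X_V$ denotes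 model $\mathcal{M}$ under scheduler $X$ with visibility $V$. For a team $R$ of robots, $Task(\mathcal{M},X,V;R)$ is the set of problems (tasks where robots must form some configuration(s) subject to conditions) solvable by $R$ in that setting. $\mathcal{R}$ is the set of all teams, and $\mathcal{R}_n$ the set of teams of size $n$. - $\mathcal{M}^{X_1}_{V_1} \ge \mathcal{N}^{X_2}_{V_2}$ if for all $R\in\mathcal{R}$, $Task(\mathcal{M},X_1,V_1;R)\supseteq Task(\mathcal{N},X_2,V_2;R)$. - $>$ means $\ge$ holds and there exists $R\in\mathcal{R}$ with $Task(\mathcal{M},X_1,V_1;R)\setminus Task(\mathcal{N},X_2,V_2;R)\neq\emptyset$. - $\perp$ (incomparable) means there exist $R_1,R_2\in\mathcal{R}$ with $Task(\mathcal{M},X_1,V_1;R_1)\setminus Task(\mathcal{N},X_2,V_2;R_1)\neq\emptyset$ and $Task(\mathcal{N},X_2,V_2;R_2)\setminus Task(\mathcal{M},X_1,V_1;R_2)\neq\emptyset$. *)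

theory Defs
  imports Complex_Main
begin

text \<open>Robots move in the Euclidean plane, modelled as the complex numbers.
  A team of n robots is indexed by 0..n-1.\<close>

type_synonym config = "nat \<Rightarrow> complex"

text \<open>A local coordinate system of a robot: its origin is always the robot's
  current position; the pair (u, b) gives the orientation of the axes
  (rotation by the unit complex u) and the handedness (b = True: mirrored).
  No agreement between robots: each robot has its own, arbitrary frame.\<close>
type_synonym frame = "complex \<times> bool"

definition valid_frame :: "frame \<Rightarrow> bool" where
  "valid_frame f \<longleftrightarrow> cmod (fst f) = 1"

definition to_global :: "frame \<Rightarrow> complex \<Rightarrow> complex" where
  "to_global f z = fst f * (if snd f then cnj z else z)"

definition to_local :: "frame \<Rightarrow> complex \<Rightarrow> complex" where
  "to_local f w = (if snd f then cnj (w / fst f) else w / fst f)"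

text \<open>FSTA algorithm: from the internal (persistent, private) state and the
  snapshot (positions of the visible robots, in local coordinates),
  compute the new state and the destination (in local coordinates).
  States are natural numbers; finiteness of the state set is imposed in
  the solvability definition.\<close>
type_synonym algorithm = "nat \<Rightarrow> complex set \<Rightarrow> nat \<times> complex"

type_synonym problem = "(nat \<Rightarrow> config) \<Rightarrow> bool"

text \<open>A team: number of robots n and visibility radius V_r.\<close>
type_synonym team = "nat \<times> real"

definition teams :: "team set" where
  "teams = {(n, r). 0 < n \<and> 0 < r}"

datatype visibility = FullVis | LimitedVis

definition visible :: "visibility \<Rightarrow> real \<Rightarrow> complex \<Rightarrow> complex \<Rightarrow> bool" where
  "visible v r x y = (case v of FullVis \<Rightarrow> True | LimitedVis \<Rightarrow> cmod (y - x) \<le> r)"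

definition snapshot ::
  "visibility \<Rightarrow> nat \<Rightarrow> real \<Rightarrow> (nat \<Rightarrow> frame) \<Rightarrow> config \<Rightarrow> nat \<Rightarrow> complex set" where
  "snapshot v n r fr c i =
     {to_local (fr i) (c j - c i) | j. j < n \<and> visible v r (c i) (c j)}"

text \<open>Execution under the fully synchronous scheduler: all robots are
  activated every round and move rigidly to their destinations.\<close>
fun exec :: "visibility \<Rightarrow> nat \<Rightarrow> real \<Rightarrow> algorithm \<Rightarrow> nat \<Rightarrow> (nat \<Rightarrow> frame)
              \<Rightarrow> config \<Rightarrow> nat \<Rightarrow> config \<times> (nat \<Rightarrow> nat)" where
  "exec v n r A q0 fr c0 0 = (c0, (\<lambda>_. q0))"
| "exec v n r A q0 fr c0 (Suc t) =
     (let (c, s) = exec v n r A q0 fr c0 t;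
          out = (\<lambda>i. A (s i) (snapshot v n r fr c i))
      in ((\<lambda>i. if i < n then c i + to_global (fr i) (snd (out i)) else c i),
          (\<lambda>i. if i < n then fst (out i) else s i)))"

definition trajectory :: "visibility \<Rightarrow> nat \<Rightarrow> real \<Rightarrow> algorithm \<Rightarrow> nat \<Rightarrow> (nat \<Rightarrow> frame)
              \<Rightarrow> config \<Rightarrow> nat \<Rightarrow> config" where
  "trajectory v n r A q0 fr c0 = (\<lambda>t. fst (exec v n r A q0 fr c0 t))"

definition vis_connected :: "nat \<Rightarrow> real \<Rightarrow> config \<Rightarrow> bool" where
  "vis_connected n r c \<longleftrightarrow>
     (\<forall>i<n. \<forall>j<n. (i, j) \<in> {(a, b). a < n \<and> b < n \<and> cmod (c a - c b) \<le> r}\<^sup>*)"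

definition admissible_init :: "nat \<Rightarrow> real \<Rightarrow> config \<Rightarrow> bool" where
  "admissible_init n r c \<longleftrightarrow>
     (\<forall>i<n. \<forall>j<n. i \<noteq> j \<longrightarrow> c i \<noteq> c j) \<and> vis_connected n r c"

definition FSTA_F_solves :: "visibility \<Rightarrow> team \<Rightarrow> problem \<Rightarrow> bool" where
  "FSTA_F_solves v R P =
     (case R of (n, r) \<Rightarrow>
       \<exists>Q q0 A. finite (Q :: nat set) \<and> q0 \<in> Q \<and> (\<forall>q\<in>Q. \<forall>S. fst (A q S) \<in> Q) \<and>
         (\<forall>fr c0. (\<forall>i<n. valid_frame (fr i)) \<longrightarrow> admissible_init n r c0 \<longrightarrow>
                   P (trajectory v n r A q0 fr c0)))"

definition Task_FSTA_F :: "visibility \<Rightarrow> team \<Rightarrow> problem set" where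
  "Task_FSTA_F v R = {P. FSTA_F_solves v R P}"

definition model_ge :: "(team \<Rightarrow> problem set) \<Rightarrow> (team \<Rightarrow> problem set) \<Rightarrow> bool" where
  "model_ge T1 T2 \<longleftrightarrow> (\<forall>R\<in>teams. T2 R \<subseteq> T1 R)"

definition model_gt :: "(team \<Rightarrow> problem set) \<Rightarrow> (team \<Rightarrow> problem set) \<Rightarrow> bool" where
  "model_gt T1 T2 \<longleftrightarrow> model_ge T1 T2 \<and> (\<exists>R\<in>teams. T1 R - T2 R \<noteq> {})"

end

theory Submission
  imports Defs
begin

lemma norm_to_local: "valid_frame f \<Longrightarrow> cmod (to_local f w) = cmod w"
  unfolding valid_frame_def to_local_def by (auto simp: norm_divide)

lemma norm_to_global: "valid_frame f \<Longrightarrow> cmod (to_global f w) = cmod w"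
  unfolding valid_frame_def to_global_def by (auto simp: norm_mult)

lemma snap_eq:
  assumes "valid_frame (fr i)"
  shows "{z \<in> snapshot FullVis n r fr c i. cmod z \<le> r} = snapshot LimitedVis n r fr c i"
  unfolding snapshot_def visible_def using norm_to_local[OF assms] by auto

lemma exec_eq:
  assumes "\<forall>i<n. valid_frame (fr i)"
  shows "exec FullVis n r (\<lambda>q S. A q {z\<in>S. cmod z \<le> r}) q0 fr c0 t = exec LimitedVis n r A q0 fr c0 t"
proof (induction t)
  case 0
  then show ?case by simp
next
  case (Suc t)
  obtain c s where cs: "exec LimitedVis n r A q0 fr c0 t = (c, s)" by fastforce
  show ?case using Suc cs assms by (auto simp: Let_def fun_eq_iff snap_eq)
qed

lemma part1: "model_ge (Task_FSTA_F FullVis) (Task_FSTA_F LimitedVis)"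
  unfolding model_ge_def
proof (intro ballI subsetI)
  fix R P assume "R \<in> teams" "P \<in> Task_FSTA_F LimitedVis R"
  obtain n r where R: "R = (n, r)" by fastforce
  from \<open>P \<in> _\<close> obtain Q q0 A where H: "finite (Q :: nat set)" "q0 \<in> Q" "\<forall>q\<in>Q. \<forall>S. fst (A q S) \<in> Q"
    "\<forall>fr c0. (\<forall>i<n. valid_frame (fr i)) \<longrightarrow> admissible_init n r c0 \<longrightarrow>
                   P (trajectory LimitedVis n r A q0 fr c0)"
    unfolding Task_FSTA_F_def FSTA_F_solves_def R by auto
  have "FSTA_F_solves FullVis (n, r) P"
    unfolding FSTA_F_solves_def
    apply simp
    apply (rule exI[of _ Q], simp add: H, rule exI[of _ q0], simp add: H, rule exI[of _ "\<lambda>q S. A q {z\<in>S. cmod z \<le> r}"])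
    using H by (auto simp: trajectory_def exec_eq)
  then show "P \<in> Task_FSTA_F FullVis R" unfolding Task_FSTA_F_def R by simp
qed

definition Pb :: problem where
  "Pb traj = (\<forall>i<3. (\<forall>j<3. cmod (traj 0 j - traj 0 i) \<le> cmod (traj 1 i - traj 0 i)) \<and>
                     (\<exists>j<3. cmod (traj 1 i - traj 0 i) = cmod (traj 0 j - traj 0 i)))"

lemma traj1: "i < n \<Longrightarrow> trajectory v n r A q0 fr c0 1 i =
   c0 i + to_global (fr i) (snd (A q0 (snapshot v n r fr c0 i)))"
  by (simp add: trajectory_def)

lemma traj1': "i < n \<Longrightarrow> trajectory v n r A q0 fr c0 (Suc 0) i =
   c0 i + to_global (fr i) (snd (A q0 (snapshot v n r fr c0 i)))"
  by (simp add: trajectory_def)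

lemma traj0: "trajectory v n r A q0 fr c0 0 = c0"
  by (simp add: trajectory_def)

lemma full_solves: "FSTA_F_solves FullVis (3, 1) Pb"
  unfolding FSTA_F_solves_def
proof (simp, intro exI conjI allI impI)
  let ?A = "\<lambda>(q::nat) S. (0::nat, complex_of_real (Max (cmod ` S)))"
  show "finite {0::nat}" by simp
  show "(0::nat) \<in> {0}" by simp
  show "\<forall>q\<in>{0}. \<forall>S. fst (?A q S) \<in> {0}" by simp
  fix fr :: "nat \<Rightarrow> frame" and c0 :: config assume fr: "\<forall>i<3. valid_frame (fr i)" and "admissible_init 3 1 c0"
  show "Pb (trajectory FullVis 3 1 ?A 0 fr c0)"
    unfolding Pb_def
  proof (intro allI impI)
    fix i :: nat assume i: "i < 3"
    have v: "valid_frame (fr i)" using fr i by simp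
    have sn: "snapshot FullVis 3 1 fr c0 i = (\<lambda>j. to_local (fr i) (c0 j - c0 i)) ` {..<3}"
      unfolding snapshot_def visible_def by auto
    have img: "cmod ` snapshot FullVis 3 1 fr c0 i = (\<lambda>j. cmod (c0 j - c0 i)) ` {..<3}"
      unfolding sn image_image norm_to_local[OF v] ..
    define M where "M = Max ((\<lambda>j. cmod (c0 j - c0 i)) ` {..<(3::nat)})"
    have ge: "\<forall>j<3. cmod (c0 j - c0 i) \<le> M" unfolding M_def by (auto intro: Max_ge)
    have "M \<in> (\<lambda>j. cmod (c0 j - c0 i)) ` {..<(3::nat)}" unfolding M_def by (rule Max_in) (simp, metis empty_iff image_eqI lessThan_iff zero_less_numeral)
    then have ex: "\<exists>j<3. M = cmod (c0 j - c0 i)" by auto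
    have M0: "M \<ge> 0" using ge i by force
    have d: "cmod (trajectory FullVis 3 1 ?A 0 fr c0 1 i - trajectory FullVis 3 1 ?A 0 fr c0 0 i) = M"
      using i fr M0 by (simp add: traj1 traj1' traj0 img M_def[symmetric] norm_to_global)
    show "(\<forall>j<3. cmod (trajectory FullVis 3 1 ?A 0 fr c0 0 j - trajectory FullVis 3 1 ?A 0 fr c0 0 i)
          \<le> cmod (trajectory FullVis 3 1 ?A 0 fr c0 1 i - trajectory FullVis 3 1 ?A 0 fr c0 0 i)) \<and>
         (\<exists>j<3. cmod (trajectory FullVis 3 1 ?A 0 fr c0 1 i - trajectory FullVis 3 1 ?A 0 fr c0 0 i) =
                 cmod (trajectory FullVis 3 1 ?A 0 fr c0 0 j - trajectory FullVis 3 1 ?A 0 fr c0 0 i))"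
      using d ge ex by (simp add: traj0)
  qed
qed

lemma lt3: "(j::nat) < 3 \<longleftrightarrow> j = 0 \<or> j = 1 \<or> j = 2" by auto

lemma adm:
  assumes "c 0 = 0" "c 1 = 1" "c 2 = of_real x" "1 < x" "x \<le> 2"
  shows "admissible_init 3 1 c"
proof -
  let ?E = "{(a, b). a < (3::nat) \<and> b < 3 \<and> cmod (c a - c b) \<le> 1}"
  have e01: "(0,1) \<in> ?E" "(1,0) \<in> ?E" using assms by auto
  have n12: "cmod (c 1 - c 2) = x - 1" "cmod (c 2 - c 1) = x - 1"
  proof -
    have "c 1 - c 2 = of_real (1 - x)" "c 2 - c 1 = of_real (x - 1)" using assms by simp_all
    moreover have "cmod (complex_of_real (1 - x)) = x - 1" "cmod (complex_of_real (x - 1)) = x - 1"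
      using assms(4) unfolding norm_of_real by simp_all
    ultimately show "cmod (c 1 - c 2) = x - 1" "cmod (c 2 - c 1) = x - 1"
      by (simp_all only:)
  qed
  have e12: "(1,2) \<in> ?E" "(2,1) \<in> ?E" using n12 assms by auto
  have r: "(0,2) \<in> ?E\<^sup>*" "(2,0) \<in> ?E\<^sup>*"
    using e01 e12 by (meson converse_rtrancl_into_rtrancl r_into_rtrancl)+
  have all: "\<forall>i\<in>{0,1,2}. \<forall>j\<in>{0,1,2}. (i, j) \<in> ?E\<^sup>*"
    using e01 e12 r by (auto intro: r_into_rtrancl)
  have "vis_connected 3 1 c"
    unfolding vis_connected_def
  proof (intro allI impI)
    fix i j :: nat assume "i < 3" "j < 3"
    then have "i \<in> {0,1,2}" "j \<in> {0,1,2}" by auto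
    then show "(i, j) \<in> ?E\<^sup>*" using all by blast
  qed
  moreover have "\<forall>i<3. \<forall>j<3. i \<noteq> j \<longrightarrow> c i \<noteq> c j"
    unfolding lt3 using assms by auto
  ultimately show ?thesis unfolding admissible_init_def by simp
qed

lemma not_limited: "\<not> FSTA_F_solves LimitedVis (3, 1) Pb"
proof
  assume "FSTA_F_solves LimitedVis (3, 1) Pb"
  then obtain q0 A where H: "\<forall>fr c0. (\<forall>i<3. valid_frame (fr i)) \<longrightarrow> admissible_init 3 1 c0 \<longrightarrow>
                   Pb (trajectory LimitedVis 3 1 A q0 fr c0)"
    unfolding FSTA_F_solves_def by auto
  define fr :: "nat \<Rightarrow> frame" where "fr = (\<lambda>_. (1, False))"
  have fr: "\<forall>i<3. valid_frame (fr i)" unfolding fr_def valid_frame_def by simp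
  define c1 :: config where "c1 = (\<lambda>j. if j = 2 then of_real 2 else of_nat j)"
  define c2 :: config where "c2 = (\<lambda>j. if j = 2 then of_real (3/2) else of_nat j)"
  have a1: "admissible_init 3 1 c1" by (rule adm[where x=2]) (auto simp: c1_def)
  have a2: "admissible_init 3 1 c2" by (rule adm[where x="3/2"]) (auto simp: c2_def)
  have s1: "snapshot LimitedVis 3 1 fr c1 0 = {0, 1}"
    unfolding snapshot_def visible_def c1_def fr_def to_local_def lt3
    apply auto
    apply (rule exI[of _ 0], simp)
    apply (rule exI[of _ "Suc 0"], simp)
    done
  have s2: "snapshot LimitedVis 3 1 fr c2 0 = {0, 1}"
    unfolding snapshot_def visible_def c2_def fr_def to_local_def lt3
    apply auto
    apply (rule exI[of _ 0], simp)
    apply (rule exI[of _ "Suc 0"], simp)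
    done
  define D where "D = cmod (to_global (fr 0) (snd (A q0 {0, 1})))"
  have P1: "Pb (trajectory LimitedVis 3 1 A q0 fr c1)" using H fr a1 by blast
  have P2: "Pb (trajectory LimitedVis 3 1 A q0 fr c2)" using H fr a2 by blast
  have d1: "cmod (trajectory LimitedVis 3 1 A q0 fr c1 1 0 - trajectory LimitedVis 3 1 A q0 fr c1 0 0) = D"
    by (simp add: traj1 traj1' traj0 s1 D_def)
  have d2: "cmod (trajectory LimitedVis 3 1 A q0 fr c2 1 0 - trajectory LimitedVis 3 1 A q0 fr c2 0 0) = D"
    by (simp add: traj1 traj1' traj0 s2 D_def)
  have "cmod (c1 2 - c1 0) \<le> D"
  proof -
    have X: "\<forall>j<3. cmod (c1 j - c1 0) \<le> cmod (trajectory LimitedVis 3 1 A q0 fr c1 1 0 - c1 0)"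
      using P1 unfolding Pb_def traj0 by simp
    show ?thesis using X[rule_format, of 2] d1 by (simp add: traj0)
  qed
  then have A1: "2 \<le> D" by (simp add: c1_def)
  have "\<exists>j<3. D = cmod (c2 j - c2 0)"
  proof -
    have X: "\<exists>j<3. cmod (trajectory LimitedVis 3 1 A q0 fr c2 1 0 - c2 0) = cmod (c2 j - c2 0)"
      using P2 unfolding Pb_def traj0 by simp
    show ?thesis using X d2 by (simp add: traj0)
  qed
  then have A2: "D \<le> 3/2" unfolding lt3 by (auto simp: c2_def)
  from A1 A2 show False by linarith
qed

theorem theorem3:
  shows "model_gt (Task_FSTA_F FullVis) (Task_FSTA_F LimitedVis)"
  unfolding model_gt_def
proof (intro conjI part1 bexI[of _ "(3, 1)"])
  show "(3, 1) \<in> teams" unfolding teams_def by simp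
  show "Task_FSTA_F FullVis (3, 1) - Task_FSTA_F LimitedVis (3, 1) \<noteq> {}"
    using full_solves not_limited unfolding Task_FSTA_F_def by blast
qed

end
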